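(* Let $f:\mathcal{X}\times\mathcal{Y}\to\mathcal{V}=\{0,1,\dots,m-1\}$ and define $f_n^{\mathsf t}:\mathcal{X}^n\times\mathcal{Y}^n\to\mathcal{P}_n(\mathcal{V})$ by $f_n^{\mathsf t}(\mathbf{x},\mathbf{y})=P_{(f(x_1,y_1),\dots,f(x_n,y_n))}$ (the type of the sequence of symbol-wise values). Define $\hat f^{\mathsf t}:\mathcal{X}\times\mathcal{Y}\to\mathcal{V}\cup\{m\}$ by $\hat f^{\mathsf t}(x,y)=m$ if $f(x,\cdot)$ is constant on $\mathcal{Y}$, and $\hat f^{\mathsf t}(x,y)=f(x,y)$ otherwise. Then $f_n^{\mathsf t}$ is $\overline{\mathcal{X}}_{\hat f^{\mathsf t}}$-informative.
   Context: Finite alphabets $\mathcal{X},\mathcal{Y}$. The type of $\mathbf{s}\in\mathcal{S}^n$ is $P_{\mathbf{s}}(s)=|\{i:s_i=s\}|/n$; $\mathcal{P}_n(\mathcal{S})$ is the set of types of sequences in $\mathcal{S}^n$. For a function $g$ on $\mathcal{X}\times\mathcal{Y}$, $\overline{\mathcal{X}}_g$ is the partition of $\mathcal{X}$ in which $x,\hat x$ lie in the same cell iff $g(x,y)=g(\hat x,y)$ for all $y$. For a partition $\overline{\mathcal{X}}$ and $x\in\mathcal{X}$, $[x]_{\overline{\mathcal{X}}}$ is the cell containing $x$; $[\mathbf{x}]_{\overline{\mathcal{X}}}$ is applied componentwise. For $a\in\mathcal{X}$, $a\mathbf{x}^{(-i)}$ is $\mathbf{x}$ with its $i$th entry replaced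 by $a$; similarly $b\mathbf{y}^{(-i)}$. For a permutation $\sigma$ of $[1:n]$, $\sigma(\mathbf{x})$ has $i$th entry $x_{\sigma(i)}$. $f_n:\mathcal{X}^n\times\mathcal{Y}^n\to\mathcal{Z}_n$ is $\overline{\mathcal{X}}$-informative if (1) for each $i\in[1:n]$ there is a map $\xi_n^{(i)}:\mathcal{Z}_n^{|\mathcal{Y}|}\to\overline{\mathcal{X}}$ with $\xi_n^{(i)}\big((f_n(a\mathbf{x}^{(-i)},b\mathbf{y}^{(-i)}):b\in\mathcal{Y})\big)=[a]_{\overline{\mathcal{X}}}$ for all $a\in\mathcal{X}$, $(\mathbf{x},\mathbf{y})$; and (2) $f_n(\sigma(\mathbf{x}),\mathbf{y})=f_n(\mathbf{x},\mathbf{y})$ for all $(\mathbf{x},\mathbf{y})$ and all permutations $\sigma$ with $[\sigma(\mathbf{x})]_{\overline{\mathcal{X}}}=[\mathbf{x}]_{\overline{\mathcal{X}}}$. *)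

theory Defs
  imports Complex_Main "HOL-Combinatorics.Permutations"
begin

text \<open>Sequences in X^n are lists of length n (indices 0..n-1).
A partition of X is a set of cells ('x set set).\<close>

definition partition_of :: "('x \<Rightarrow> 'y \<Rightarrow> 'v) \<Rightarrow> 'x set set" where
  "partition_of g = UNIV // {(x, x'). \<forall>y. g x y = g x' y}"

definition cell :: "'x set set \<Rightarrow> 'x \<Rightarrow> 'x set" where
  "cell P a = (THE B. B \<in> P \<and> a \<in> B)"

definition permute_seq :: "(nat \<Rightarrow> nat) \<Rightarrow> 'a list \<Rightarrow> 'a list" where
  "permute_seq \<sigma> xs = map (\<lambda>i. xs ! \<sigma> i) [0..<length xs]"

definition informative ::
  "nat \<Rightarrow> 'x set set \<Rightarrow> ('x list \<Rightarrow> 'y list \<Rightarrow> 'z) \<Rightarrow> bool" where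
  "informative n P fn \<longleftrightarrow>
     (\<forall>i<n. \<exists>\<xi> :: ('y \<Rightarrow> 'z) \<Rightarrow> 'x set.
        \<forall>a xs ys. length xs = n \<longrightarrow> length ys = n \<longrightarrow>
          \<xi> (\<lambda>b. fn (xs[i := a]) (ys[i := b])) = cell P a) \<and>
     (\<forall>xs ys \<sigma>. length xs = n \<longrightarrow> length ys = n \<longrightarrow> \<sigma> permutes {0..<n} \<longrightarrow>
        map (cell P) (permute_seq \<sigma> xs) = map (cell P) xs \<longrightarrow>
        fn (permute_seq \<sigma> xs) ys = fn xs ys)"

definition fn_type :: "nat \<Rightarrow> ('x \<Rightarrow> 'y \<Rightarrow> nat) \<Rightarrow> 'x list \<Rightarrow> 'y list \<Rightarrow> (nat \<Rightarrow> real)" where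
  "fn_type n f xs ys = (\<lambda>v. real (card {i. i < n \<and> f (xs ! i) (ys ! i) = v}) / real n)"

definition f_hat :: "nat \<Rightarrow> ('x \<Rightarrow> 'y \<Rightarrow> nat) \<Rightarrow> 'x \<Rightarrow> 'y \<Rightarrow> nat" where
  "f_hat m f x y = (if (\<forall>y1 y2. f x y1 = f x y2) then m else f x y)"

end

theory Submission
  imports Defs
begin

lemma cell_partition:
  "cell (partition_of g) a = {x. \<forall>y. g x y = g a y}"
proof -
  let ?R = "{(x, x'). \<forall>y. g x y = g x' y}"
  have eq: "equiv UNIV ?R" unfolding equiv_def refl_on_def sym_def trans_def by auto
  have c1: "?R `` {a} \<in> partition_of g" unfolding partition_of_def by (rule quotientI) simp
  have c2: "a \<in> ?R `` {a}" by simp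
  have u: "B = ?R `` {a}" if hB: "B \<in> partition_of g" and hA: "a \<in> B" for B
  proof -
    obtain x where B: "B = ?R `` {x}" using hB unfolding partition_of_def by (auto elim!: quotientE)
    then have xa: "(x, a) \<in> ?R" using hA by simp
    show ?thesis using equiv_class_eq[OF eq xa] B by simp
  qed
  have "cell (partition_of g) a = ?R `` {a}"
    unfolding cell_def
  proof (rule the_equality)
    show "?R `` {a} \<in> partition_of g \<and> a \<in> ?R `` {a}" using c1 c2 by (rule conjI)
  next
    fix B assume "B \<in> partition_of g \<and> a \<in> B"
    thus "B = ?R `` {a}" using u by simp
  qed
  thus ?thesis by auto
qed

lemma key:
  fixes f :: "'x \<Rightarrow> 'y \<Rightarrow> nat"
  shows "(\<forall>b1 b2 v. ((if f a b1 = v then 1 else 0) - (if f a b2 = v then 1 else 0) :: real)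
           = (if f x b1 = v then 1 else 0) - (if f x b2 = v then 1 else 0))
     \<longleftrightarrow> (\<forall>y. f_hat m f x y = f_hat m f a y)" (is "?L \<longleftrightarrow> ?R")
proof
  assume L: ?L
  show ?R
  proof (cases "\<forall>y1 y2. f a y1 = f a y2")
    case True
    have "f x b1 = f x b2" for b1 b2
      using spec[OF spec[OF spec[OF L, of b1], of b2], of "f x b1"] True[rule_format, of b1 b2] by (auto split: if_splits)
    thus ?thesis using True by (simp add: f_hat_def)
  next
    case False
    have "f x y = f a y" for y
    proof -
      obtain y' where "f a y' \<noteq> f a y" using False by metis
      thus ?thesis using spec[OF spec[OF spec[OF L, of y], of y'], of "f a y"] by (auto split: if_splits)
    qed
    thus ?thesis using False by (auto simp: f_hat_def)
  qed
next
  assume R: ?R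
  show ?L
  proof (cases "\<forall>y1 y2. f a y1 = f a y2")
    case True
    have "\<forall>y1 y2. f x y1 = f x y2"
    proof (rule ccontr)
      assume nc: "\<not> (\<forall>y1 y2. f x y1 = f x y2)"
      then obtain y1 y2 where "f x y1 \<noteq> f x y2" by blast
      moreover have "f x y1 = m" "f x y2 = m"
        using R[rule_format, of y1] R[rule_format, of y2] True nc by (simp_all add: f_hat_def)
      ultimately show False by simp
    qed
    note xc = this
    show ?L
    proof (intro allI)
      fix b1 b2 v
      have "f a b1 = f a b2" "f x b1 = f x b2" using True xc by blast+
      thus "((if f a b1 = v then 1 else 0) - (if f a b2 = v then 1 else 0) :: real)
           = (if f x b1 = v then 1 else 0) - (if f x b2 = v then 1 else 0)" by simp
    qed
  next
    case False
    have "\<not> (\<forall>y1 y2. f x y1 = f x y2)"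
    proof
      assume c: "\<forall>y1 y2. f x y1 = f x y2"
      then have "f a y = m" for y using R[rule_format, of y] False by (simp add: f_hat_def)
      thus False using False by simp
    qed
    then have "f x y = f a y" for y using R[rule_format, of y] False by (auto simp: f_hat_def split: if_splits)
    thus ?L by simp
  qed
qed

lemma card_split:
  fixes n i :: nat
  assumes "i < n"
  shows "card {j. j < n \<and> P j} = card {j. j < n \<and> j \<noteq> i \<and> P j} + (if P i then 1 else 0)"
proof (cases "P i")
  case True
  have "{j. j < n \<and> P j} = insert i {j. j < n \<and> j \<noteq> i \<and> P j}" using True assms by auto
  moreover have "finite {j. j < n \<and> j \<noteq> i \<and> P j}" by simp
  ultimately show ?thesis using True by simp
next
  case False
  have "{j. j < n \<and> P j} = {j. j < n \<and> j \<noteq> i \<and> P j}" using False by auto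
  thus ?thesis using False by simp
qed

lemma count_upd:
  assumes "i < n" "length xs = n" "length ys = n"
  shows "fn_type n f (xs[i:=a]) (ys[i:=b]) v =
     (real (card {j. j < n \<and> j \<noteq> i \<and> f (xs!j) (ys!j) = v}) + (if f a b = v then 1 else 0)) / real n"
proof -
  have "card {j. j < n \<and> f (xs[i:=a] ! j) (ys[i:=b] ! j) = v}
      = card {j. j < n \<and> j \<noteq> i \<and> f (xs[i:=a] ! j) (ys[i:=b] ! j) = v} + (if f a b = v then 1 else 0)"
    using card_split[OF assms(1), of "\<lambda>j. f (xs[i:=a] ! j) (ys[i:=b] ! j) = v"] assms by simp
  also have "{j. j < n \<and> j \<noteq> i \<and> f (xs[i:=a] ! j) (ys[i:=b] ! j) = v}
      = {j. j < n \<and> j \<noteq> i \<and> f (xs!j) (ys!j) = v}" by auto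
  finally show ?thesis unfolding fn_type_def by simp
qed

theorem proposition3:
  fixes f :: "'x::finite \<Rightarrow> 'y::finite \<Rightarrow> nat" and m n :: nat
  assumes "\<forall>x y. f x y < m"
  shows "informative n (partition_of (f_hat m f)) (fn_type n f)"
  unfolding informative_def
proof (intro conjI allI impI)
  fix i assume i: "i < n"
  hence n0: "real n > 0" by simp
  define \<xi> where "\<xi> = (\<lambda>F :: 'y \<Rightarrow> nat \<Rightarrow> real. {x. \<forall>b1 b2 v. F b1 v - F b2 v =
      ((if f x b1 = v then 1 else 0) - (if f x b2 = v then 1 else 0)) / real n})"
  show "\<exists>\<xi>. \<forall>a xs ys. length xs = n \<longrightarrow> length ys = n \<longrightarrow>
          \<xi> (\<lambda>b. fn_type n f (xs[i := a]) (ys[i := b])) = cell (partition_of (f_hat m f)) a"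
  proof (intro exI allI impI)
    fix a :: 'x and xs :: "'x list" and ys :: "'y list" assume l: "length xs = n" "length ys = n"
    have d: "fn_type n f (xs[i:=a]) (ys[i:=b1]) v - fn_type n f (xs[i:=a]) (ys[i:=b2]) v
        = ((if f a b1 = v then 1 else 0) - (if f a b2 = v then 1 else 0)) / real n" for b1 b2 v
      unfolding count_upd[OF i l] by (simp only: diff_divide_distrib[symmetric]) (simp split: if_splits)
    have "x \<in> \<xi> (\<lambda>b. fn_type n f (xs[i := a]) (ys[i := b])) \<longleftrightarrow>
          (\<forall>y. f_hat m f x y = f_hat m f a y)" for x
    proof -
      have "x \<in> \<xi> (\<lambda>b. fn_type n f (xs[i := a]) (ys[i := b])) \<longleftrightarrow>
        (\<forall>b1 b2 v. ((if f a b1 = v then 1 else 0) - (if f a b2 = v then 1 else 0) :: real)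
           = (if f x b1 = v then 1 else 0) - (if f x b2 = v then 1 else 0))"
        unfolding \<xi>_def d using n0 by (simp add: divide_cancel_right)
      thus ?thesis by (simp only: key)
    qed
    thus "\<xi> (\<lambda>b. fn_type n f (xs[i := a]) (ys[i := b])) = cell (partition_of (f_hat m f)) a"
      unfolding cell_partition by auto
  qed
next
  fix xs :: "'x list" and ys :: "'y list" and \<sigma>
  assume l: "length xs = n" "length ys = n" and p: "\<sigma> permutes {0..<n}"
    and c: "map (cell (partition_of (f_hat m f))) (permute_seq \<sigma> xs) = map (cell (partition_of (f_hat m f))) xs"
  have sl: "\<sigma> j < n" if "j < n" for j using p that permutes_in_image by fastforce
  have fh: "f_hat m f (xs ! \<sigma> j) = f_hat m f (xs ! j)" if "j < n" for j
  proof -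
    have "cell (partition_of (f_hat m f)) (xs ! \<sigma> j) = cell (partition_of (f_hat m f)) (xs ! j)"
      using arg_cong[OF c, of "\<lambda>l. l ! j"] that l unfolding permute_seq_def by simp
    hence "xs ! j \<in> cell (partition_of (f_hat m f)) (xs ! \<sigma> j)" unfolding cell_partition by auto
    thus ?thesis unfolding cell_partition by auto
  qed
  define K where "K x = (\<forall>y1 y2. f x y1 = f x y2)" for x
  have Kfh: "K x \<longleftrightarrow> (\<forall>y. f_hat m f x y = m)" for x
  proof
    assume "K x" thus "\<forall>y. f_hat m f x y = m" unfolding K_def f_hat_def by simp
  next
    assume a: "\<forall>y. f_hat m f x y = m"
    show "K x"
    proof (rule ccontr)
      assume "\<not> K x"
      then have "f x y = m" for y using a[rule_format, of y] unfolding K_def f_hat_def by (auto split: if_splits)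
      thus False using \<open>\<not> K x\<close> unfolding K_def by simp
    qed
  qed
  define C where "C = {j. j < n \<and> K (xs ! j)}"
  define D where "D = {j. j < n \<and> \<not> K (xs ! j)}"
  have KC: "K (xs ! \<sigma> j) \<longleftrightarrow> K (xs ! j)" if "j < n" for j using fh[OF that] Kfh by simp
  have sC: "\<sigma> ` C \<subseteq> C" unfolding C_def using KC sl by auto
  have injC: "inj_on \<sigma> C" using permutes_inj[OF p] by (simp add: inj_on_def inj_def)
  have imC: "\<sigma> ` C = C" using endo_inj_surj[of C \<sigma>] sC injC unfolding C_def by auto
  have nK: "f (xs ! \<sigma> j) = f (xs ! j)" if "j \<in> D" for j
  proof -
    have jn: "j < n" using that unfolding D_def by simp
    have "\<not> K (xs ! \<sigma> j)" "\<not> K (xs ! j)" using that KC unfolding D_def by auto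
    hence a1: "\<not>(\<forall>y1 y2. f (xs ! \<sigma> j) y1 = f (xs ! \<sigma> j) y2)" "\<not>(\<forall>y1 y2. f (xs ! j) y1 = f (xs ! j) y2)"
      unfolding K_def by auto
    show ?thesis
    proof
      fix y
      have "f_hat m f (xs ! \<sigma> j) y = f_hat m f (xs ! j) y" by (rule fun_cong[OF fh[OF jn]])
      thus "f (xs ! \<sigma> j) y = f (xs ! j) y" unfolding f_hat_def if_not_P[OF a1(1)] if_not_P[OF a1(2)] .
    qed
  qed
  obtain y0 :: 'y where True by simp
  have Ky: "f x y = f x y0" if "K x" for x y using that unfolding K_def by auto
  have fin: "finite C" "finite D" unfolding C_def D_def by auto
  have disj: "C \<inter> D = {}" unfolding C_def D_def by auto
  have un: "{..<n} = C \<union> D" unfolding C_def D_def by auto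
  have cnt: "card {j. j < n \<and> P j} = (\<Sum>j\<in>C. if P j then 1 else 0) + (\<Sum>j\<in>D. if P j then (1::nat) else 0)" for P
  proof -
    have "card {j. j < n \<and> P j} = (\<Sum>j<n. if P j then 1 else 0)"
      by (simp add: sum.If_cases Int_def)
    also have "\<dots> = (\<Sum>j\<in>C. if P j then 1 else 0) + (\<Sum>j\<in>D. if P j then 1 else 0)"
      unfolding un using sum.union_disjoint[OF fin disj] by simp
    finally show ?thesis .
  qed
  have "card {j. j < n \<and> f (permute_seq \<sigma> xs ! j) (ys ! j) = v} = card {j. j < n \<and> f (xs ! j) (ys ! j) = v}" for v
  proof -
    have e1: "{j. j < n \<and> f (permute_seq \<sigma> xs ! j) (ys ! j) = v} = {j. j < n \<and> f (xs ! \<sigma> j) (ys ! j) = v}"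
      using l unfolding permute_seq_def by auto
    have sC: "(\<Sum>j\<in>C. if f (xs ! \<sigma> j) (ys ! j) = v then 1 else 0) = (\<Sum>j\<in>C. if f (xs ! j) (ys ! j) = v then 1 else (0::nat))"
    proof -
      have "(\<Sum>j\<in>C. if f (xs ! \<sigma> j) (ys ! j) = v then 1 else 0) = (\<Sum>j\<in>C. if f (xs ! \<sigma> j) y0 = v then 1 else (0::nat))"
      proof (rule sum.cong[OF refl])
        fix j assume "j \<in> C"
        hence "K (xs ! \<sigma> j)" using KC unfolding C_def by auto
        thus "(if f (xs ! \<sigma> j) (ys ! j) = v then 1 else 0) = (if f (xs ! \<sigma> j) y0 = v then 1 else (0::nat))"
          using Ky[of "xs ! \<sigma> j" "ys ! j"] by simp
      qed
      also have "\<dots> = (\<Sum>j\<in>\<sigma> ` C. if f (xs ! j) y0 = v then 1 else 0)"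
        using sum.reindex[OF injC, of "\<lambda>j. if f (xs ! j) y0 = v then 1 else (0::nat)"] by simp
      also have "\<dots> = (\<Sum>j\<in>C. if f (xs ! j) (ys ! j) = v then 1 else 0)"
        unfolding imC
      proof (rule sum.cong[OF refl])
        fix j assume "j \<in> C"
        hence "K (xs ! j)" unfolding C_def by auto
        thus "(if f (xs ! j) y0 = v then 1 else 0) = (if f (xs ! j) (ys ! j) = v then 1 else (0::nat))"
          using Ky[of "xs ! j" "ys ! j"] by simp
      qed
      finally show ?thesis .
    qed
    have sD: "(\<Sum>j\<in>D. if f (xs ! \<sigma> j) (ys ! j) = v then 1 else 0) = (\<Sum>j\<in>D. if f (xs ! j) (ys ! j) = v then 1 else (0::nat))"
      using nK by (intro sum.cong) auto
    show ?thesis unfolding e1 cnt sC sD ..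
  qed
  thus "fn_type n f (permute_seq \<sigma> xs) ys = fn_type n f xs ys"
    unfolding fn_type_def by simp
qed

end
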